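(* Let $(D,\mu)$ be an associative algebra over a field $k$, $\alpha:D\to D$ an algebra endomorphism, and $T:D\otimes D\to D\otimes D$ a pseudotwistor with companions $\tilde T_1,\tilde T_2$, i.e. linear maps $\tilde T_1,\tilde T_2:D^{\otimes 3}\to D^{\otimes 3}$ with $T\circ(\mathrm{id}_D\otimes\mu)=(\mathrm{id}_D\otimes\mu)\circ\tilde T_1\circ(T\otimes\mathrm{id}_D)$, $T\circ(\mu\otimes\mathrm{id}_D)=(\mu\otimes\mathrm{id}_D)\circ\tilde T_2\circ(\mathrm{id}_D\otimes T)$ and $\tilde T_1\circ(T\otimes\mathrm{id}_D)\circ(\mathrm{id}_D\otimes T)=\tilde T_2\circ(\mathrm{id}_D\otimes T)\circ(T\otimes\mathrm{id}_D)$. Assume moreover $(\alpha\otimes\alpha)\circ T=T\circ(\alpha\otimes\alpha)$. Consider the associative algebra $D^T=(D,\mu\circ T)$ and the Hom-associative algebra $D_\alpha=(D,\alpha\circ\mu,\alpha)$. Then $T$ is a Hom-pseudotwistor for $D_\alpha$ with companions $\tilde T_1,\tilde T_2$, the map $\alpha$ is an algebra endomorphism of $D^T$, and the Hom-associative algebras $(D_\alpha)^T=(D,(\alpha\circ\mu)\circ T,\alpha)$ and $(D^T)_\alpha=(D,\alpha\circ(\mu\circ T),\alpha)$ coincide. In particular, if $T$ is a twistor for $D$, then $T$ is a Hom-twistor for $D_\alpha$.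
   Context: Algebras are over $k$ and not assumed unital. A Hom-associative algebra is $(A,\mu,\alpha)$ with $\alpha(aa')=\alpha(a)\alpha(a')$ and $\alpha(a)(a'a'')=(aa')\alpha(a'')$. For a Hom-associative algebra $(D,\mu,\alpha)$, a linear $T:D\otimes D\to D\otimes D$ is a Hom-pseudotwistor with companions $\tilde T_1,\tilde T_2:D^{\otimes3}\to D^{\otimes 3}$ if $(\alpha\otimes\alpha)\circ T=T\circ(\alpha\otimes\alpha)$, $T\circ(\alpha\otimes\mu)=(\alpha\otimes\mu)\circ\tilde T_1\circ(T\otimes\mathrm{id})$, $T\circ(\mu\otimes\alpha)=(\mu\otimes\alpha)\circ\tilde T_2\circ(\mathrm{id}\otimes T)$, $\tilde T_1\circ(T\otimes\mathrm{id})\circ(\mathrm{id}\otimes T)=\tilde T_2\circ(\mathrm{id}\otimes T)\circ(T\otimes\mathrm{id})$; then $(D,\mu\circ T,\alpha)$ is Hom-associative. Write $T(d\otimes d')=d^T\otimes d'_T$, $T_{12}=T\otimes\mathrm{id}$, $T_{23}=\mathrm{id}\otimes T$, $T_{13}(d\otimes d'\otimes d'')=d^T\otimes d'\otimes d''_T$. For an associative algebra $(D,\mu)$, a twistor is a linear $T$ with $T\circ(\mathrm{id}\otimes\mu)=(\mathrm{id}\otimes\mu)\circ T_{13}\circ T_{12}$, $T\circ(\mu\otimes\mathrm{id})=(\mu\otimes\mathrm{id})\circ T_{13}\circ T_{23}$, $T_{12}\circ T_{23}=T_{23}\circ T_{12}$. For a Hom-associative algebra $(D,\mu,\alpha)$,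 a Hom-twistor is a linear $T$ with $(\alpha\otimes\alpha)\circ T=T\circ(\alpha\otimes\alpha)$, $T\circ(\alpha\otimes\mu)=(\alpha\otimes\mu)\circ T_{13}\circ T_{12}$, $T\circ(\mu\otimes\alpha)=(\mu\otimes\alpha)\circ T_{13}\circ T_{23}$, $T_{12}\circ T_{23}=T_{23}\circ T_{12}$. It is known that $D^T$ is associative for a pseudotwistor $T$, and $D_\alpha$ is Hom-associative for an algebra endomorphism $\alpha$. *)

theory Defs
  imports "HOL-Library.Poly_Mapping"
begin

(* A vector space over the field 'k with basis indexed by 'a is the space of
  finitely supported functions 'a \<Rightarrow>_0 'k.  The tensor product of the spaces
  with bases 'a and 'c is the space with basis 'a \<times> 'c.  Thus the algebra D is
  'b \<Rightarrow>_0 'k, D\<otimes>D is 'b \<times> 'b \<Rightarrow>_0 'k and D\<otimes>D\<otimes>D is 'b \<times> 'b \<times> 'b \<Rightarrow>_0 'k. *)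

definition vscale :: "'k::field \<Rightarrow> ('a \<Rightarrow>\<^sub>0 'k) \<Rightarrow> ('a \<Rightarrow>\<^sub>0 'k)" where
  "vscale c x = Poly_Mapping.map (\<lambda>v. c * v) x"

definition lin :: "(('a \<Rightarrow>\<^sub>0 'k::field) \<Rightarrow> ('c \<Rightarrow>\<^sub>0 'k)) \<Rightarrow> bool" where
  "lin f \<longleftrightarrow> (\<forall>x y. f (x + y) = f x + f y) \<and> (\<forall>c x. f (vscale c x) = vscale c (f x))"

abbreviation bv :: "'a \<Rightarrow> ('a \<Rightarrow>\<^sub>0 'k::field)" where
  "bv i \<equiv> Poly_Mapping.single i 1"

definition extend :: "('a \<Rightarrow> ('c \<Rightarrow>\<^sub>0 'k::field)) \<Rightarrow> ('a \<Rightarrow>\<^sub>0 'k) \<Rightarrow> ('c \<Rightarrow>\<^sub>0 'k)" where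
  "extend b x = (\<Sum>i\<in>Poly_Mapping.keys x. vscale (Poly_Mapping.lookup x i) (b i))"

definition tprod :: "('a \<Rightarrow>\<^sub>0 'k::field) \<Rightarrow> ('c \<Rightarrow>\<^sub>0 'k) \<Rightarrow> ('a \<times> 'c \<Rightarrow>\<^sub>0 'k)" where
  "tprod x y = Abs_poly_mapping (\<lambda>(i, j). Poly_Mapping.lookup x i * Poly_Mapping.lookup y j)"

definition tmap :: "(('a \<Rightarrow>\<^sub>0 'k::field) \<Rightarrow> ('x \<Rightarrow>\<^sub>0 'k)) \<Rightarrow> (('c \<Rightarrow>\<^sub>0 'k) \<Rightarrow> ('y \<Rightarrow>\<^sub>0 'k))
    \<Rightarrow> ('a \<times> 'c \<Rightarrow>\<^sub>0 'k) \<Rightarrow> ('x \<times> 'y \<Rightarrow>\<^sub>0 'k)" where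
  "tmap f g = extend (\<lambda>(i, j). tprod (f (bv i)) (g (bv j)))"

(* F \<otimes> g : (V_1 \<otimes> V_2) \<otimes> V_3 \<rightarrow> W_1 \<otimes> W_2, with V_1 \<otimes> V_2 \<otimes> V_3 written right-nested *)
definition tmapL :: "(('a \<times> 'b \<Rightarrow>\<^sub>0 'k::field) \<Rightarrow> ('x \<Rightarrow>\<^sub>0 'k)) \<Rightarrow> (('c \<Rightarrow>\<^sub>0 'k) \<Rightarrow> ('y \<Rightarrow>\<^sub>0 'k))
    \<Rightarrow> ('a \<times> 'b \<times> 'c \<Rightarrow>\<^sub>0 'k) \<Rightarrow> ('x \<times> 'y \<Rightarrow>\<^sub>0 'k)" where
  "tmapL F g = extend (\<lambda>(i, j, l). tprod (F (bv (i, j))) (g (bv l)))"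

definition assocr :: "(('a \<times> 'b) \<times> 'c \<Rightarrow>\<^sub>0 'k::field) \<Rightarrow> ('a \<times> 'b \<times> 'c \<Rightarrow>\<^sub>0 'k)" where
  "assocr x = Abs_poly_mapping (\<lambda>(a, b, c). Poly_Mapping.lookup x ((a, b), c))"

definition T12 :: "(('b \<times> 'b \<Rightarrow>\<^sub>0 'k::field) \<Rightarrow> ('b \<times> 'b \<Rightarrow>\<^sub>0 'k))
    \<Rightarrow> ('b \<times> 'b \<times> 'b \<Rightarrow>\<^sub>0 'k) \<Rightarrow> ('b \<times> 'b \<times> 'b \<Rightarrow>\<^sub>0 'k)" where
  "T12 T = assocr \<circ> tmapL T id"

definition T23 :: "(('b \<times> 'b \<Rightarrow>\<^sub>0 'k::field) \<Rightarrow> ('b \<times> 'b \<Rightarrow>\<^sub>0 'k))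
    \<Rightarrow> ('b \<times> 'b \<times> 'b \<Rightarrow>\<^sub>0 'k) \<Rightarrow> ('b \<times> 'b \<times> 'b \<Rightarrow>\<^sub>0 'k)" where
  "T23 T = tmap id T"

(* T_1_3(d \<otimes> d' \<otimes> d'') = d^T \<otimes> d' \<otimes> d''_T *)
definition T13 :: "(('b \<times> 'b \<Rightarrow>\<^sub>0 'k::field) \<Rightarrow> ('b \<times> 'b \<Rightarrow>\<^sub>0 'k))
    \<Rightarrow> ('b \<times> 'b \<times> 'b \<Rightarrow>\<^sub>0 'k) \<Rightarrow> ('b \<times> 'b \<times> 'b \<Rightarrow>\<^sub>0 'k)" where
  "T13 T = extend (\<lambda>(i, j, l). Abs_poly_mapping
      (\<lambda>(p, j', q). Poly_Mapping.lookup (T (bv (i, l))) (p, q) when j' = j))"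

definition assoc_algebra :: "(('b \<times> 'b \<Rightarrow>\<^sub>0 'k::field) \<Rightarrow> ('b \<Rightarrow>\<^sub>0 'k)) \<Rightarrow> bool" where
  "assoc_algebra mu \<longleftrightarrow> lin mu \<and> mu \<circ> tmapL mu id = mu \<circ> tmap id mu"

definition alg_endo :: "(('b \<times> 'b \<Rightarrow>\<^sub>0 'k::field) \<Rightarrow> ('b \<Rightarrow>\<^sub>0 'k)) \<Rightarrow> (('b \<Rightarrow>\<^sub>0 'k) \<Rightarrow> ('b \<Rightarrow>\<^sub>0 'k)) \<Rightarrow> bool" where
  "alg_endo mu alpha \<longleftrightarrow> lin alpha \<and> alpha \<circ> mu = mu \<circ> tmap alpha alpha"

definition pseudotwistor :: "(('b \<times> 'b \<Rightarrow>\<^sub>0 'k::field) \<Rightarrow> ('b \<Rightarrow>\<^sub>0 'k))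
    \<Rightarrow> (('b \<times> 'b \<Rightarrow>\<^sub>0 'k) \<Rightarrow> ('b \<times> 'b \<Rightarrow>\<^sub>0 'k))
    \<Rightarrow> (('b \<times> 'b \<times> 'b \<Rightarrow>\<^sub>0 'k) \<Rightarrow> ('b \<times> 'b \<times> 'b \<Rightarrow>\<^sub>0 'k))
    \<Rightarrow> (('b \<times> 'b \<times> 'b \<Rightarrow>\<^sub>0 'k) \<Rightarrow> ('b \<times> 'b \<times> 'b \<Rightarrow>\<^sub>0 'k)) \<Rightarrow> bool" where
  "pseudotwistor mu T T1 T2 \<longleftrightarrow> lin T \<and> lin T1 \<and> lin T2 \<and>
     T \<circ> tmap id mu = tmap id mu \<circ> T1 \<circ> T12 T \<and>
     T \<circ> tmapL mu id = tmapL mu id \<circ> T2 \<circ> T23 T \<and>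
     T1 \<circ> T12 T \<circ> T23 T = T2 \<circ> T23 T \<circ> T12 T"

definition hom_pseudotwistor :: "(('b \<times> 'b \<Rightarrow>\<^sub>0 'k::field) \<Rightarrow> ('b \<Rightarrow>\<^sub>0 'k))
    \<Rightarrow> (('b \<Rightarrow>\<^sub>0 'k) \<Rightarrow> ('b \<Rightarrow>\<^sub>0 'k))
    \<Rightarrow> (('b \<times> 'b \<Rightarrow>\<^sub>0 'k) \<Rightarrow> ('b \<times> 'b \<Rightarrow>\<^sub>0 'k))
    \<Rightarrow> (('b \<times> 'b \<times> 'b \<Rightarrow>\<^sub>0 'k) \<Rightarrow> ('b \<times> 'b \<times> 'b \<Rightarrow>\<^sub>0 'k))
    \<Rightarrow> (('b \<times> 'b \<times> 'b \<Rightarrow>\<^sub>0 'k) \<Rightarrow> ('b \<times> 'b \<times> 'b \<Rightarrow>\<^sub>0 'k)) \<Rightarrow> bool" where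
  "hom_pseudotwistor mu alpha T T1 T2 \<longleftrightarrow> lin T \<and> lin T1 \<and> lin T2 \<and>
     tmap alpha alpha \<circ> T = T \<circ> tmap alpha alpha \<and>
     T \<circ> tmap alpha mu = tmap alpha mu \<circ> T1 \<circ> T12 T \<and>
     T \<circ> tmapL mu alpha = tmapL mu alpha \<circ> T2 \<circ> T23 T \<and>
     T1 \<circ> T12 T \<circ> T23 T = T2 \<circ> T23 T \<circ> T12 T"

definition twistor :: "(('b \<times> 'b \<Rightarrow>\<^sub>0 'k::field) \<Rightarrow> ('b \<Rightarrow>\<^sub>0 'k))
    \<Rightarrow> (('b \<times> 'b \<Rightarrow>\<^sub>0 'k) \<Rightarrow> ('b \<times> 'b \<Rightarrow>\<^sub>0 'k)) \<Rightarrow> bool" where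
  "twistor mu T \<longleftrightarrow> lin T \<and>
     T \<circ> tmap id mu = tmap id mu \<circ> T13 T \<circ> T12 T \<and>
     T \<circ> tmapL mu id = tmapL mu id \<circ> T13 T \<circ> T23 T \<and>
     T12 T \<circ> T23 T = T23 T \<circ> T12 T"

definition hom_twistor :: "(('b \<times> 'b \<Rightarrow>\<^sub>0 'k::field) \<Rightarrow> ('b \<Rightarrow>\<^sub>0 'k))
    \<Rightarrow> (('b \<Rightarrow>\<^sub>0 'k) \<Rightarrow> ('b \<Rightarrow>\<^sub>0 'k))
    \<Rightarrow> (('b \<times> 'b \<Rightarrow>\<^sub>0 'k) \<Rightarrow> ('b \<times> 'b \<Rightarrow>\<^sub>0 'k)) \<Rightarrow> bool" where
  "hom_twistor mu alpha T \<longleftrightarrow> lin T \<and>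
     tmap alpha alpha \<circ> T = T \<circ> tmap alpha alpha \<and>
     T \<circ> tmap alpha mu = tmap alpha mu \<circ> T13 T \<circ> T12 T \<and>
     T \<circ> tmapL mu alpha = tmapL mu alpha \<circ> T13 T \<circ> T23 T \<and>
     T12 T \<circ> T23 T = T23 T \<circ> T12 T"

end

theory Submission
  imports Defs
begin



lemma lookup_vscale[simp]: "Poly_Mapping.lookup (vscale c x) i = c * Poly_Mapping.lookup x i"
  unfolding vscale_def by transfer (simp add: when_def)

lemma vscale_add_right: "vscale c (x + y) = vscale c x + vscale c y"
  by (rule poly_mapping_eqI) (simp add: lookup_add algebra_simps)
lemma vscale_add_left: "vscale (a + b) x = vscale a x + vscale b x"
  by (rule poly_mapping_eqI) (simp add: lookup_add algebra_simps)
lemma vscale_zero_left[simp]: "vscale 0 x = 0"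
  by (rule poly_mapping_eqI) simp
lemma vscale_zero_right[simp]: "vscale c 0 = 0"
  by (rule poly_mapping_eqI) simp
lemma vscale_one[simp]: "vscale 1 x = x"
  by (rule poly_mapping_eqI) simp
lemma vscale_vscale: "vscale a (vscale b x) = vscale (a*b) x"
  by (rule poly_mapping_eqI) simp
lemma vscale_sum: "vscale c (sum f A) = (\<Sum>i\<in>A. vscale c (f i))"
  by (rule poly_mapping_eqI) (simp add: lookup_sum sum_distrib_left)

lemma extend_superset:
  assumes "finite S" "Poly_Mapping.keys x \<subseteq> S"
  shows "extend b x = (\<Sum>i\<in>S. vscale (Poly_Mapping.lookup x i) (b i))"
  unfolding extend_def
  by (rule sum.mono_neutral_left) (use assms in \<open>auto simp: in_keys_iff\<close>)

lemma lin_extend: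
  fixes b :: "'a \<Rightarrow> ('c \<Rightarrow>\<^sub>0 'k::field)"
  shows "lin (extend b)"
  unfolding lin_def
proof (intro conjI allI)
  fix x y :: "'a \<Rightarrow>\<^sub>0 'k"
  let ?S = "Poly_Mapping.keys x \<union> Poly_Mapping.keys y"
  have "Poly_Mapping.keys (x+y) \<subseteq> ?S" by (simp add: keys_add)
  then show "extend b (x + y) = extend b x + extend b y"
    by (simp add: extend_superset[of ?S] lookup_add vscale_add_left sum.distrib)
next
  fix c and x :: "'a \<Rightarrow>\<^sub>0 'k"
  have "Poly_Mapping.keys (vscale c x) \<subseteq> Poly_Mapping.keys x" by (auto simp: in_keys_iff)
  then show "extend b (vscale c x) = vscale c (extend b x)"
    by (simp add: extend_superset[of "Poly_Mapping.keys x"] vscale_sum vscale_vscale)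
qed

lemma lin_zero: "lin f \<Longrightarrow> f 0 = 0"
  unfolding lin_def by (metis add_0 add_cancel_right_right)

lemma lin_sum: "lin f \<Longrightarrow> f (sum g A) = (\<Sum>i\<in>A. f (g i))"
  by (induction A rule: infinite_finite_induct) (auto simp: lin_zero lin_def)

lemma lin_extend_comm: "lin f \<Longrightarrow> f (extend b x) = extend (f \<circ> b) x"
  unfolding extend_def by (simp add: lin_sum) (simp add: lin_def)

lemma lin_id: "lin id" by (simp add: lin_def)

lemma extend_bv: "extend bv x = x"
proof (rule poly_mapping_eqI)
  fix k
  have "(\<Sum>i\<in>Poly_Mapping.keys x. Poly_Mapping.lookup x i * (if i = k then 1 else 0)) = (\<Sum>i\<in>Poly_Mapping.keys x. if i = k then Poly_Mapping.lookup x k else 0)"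
    by (rule sum.cong) auto
  also have "\<dots> = Poly_Mapping.lookup x k"
    by (simp add: sum.delta in_keys_iff)
  finally show "Poly_Mapping.lookup (extend bv x) k = Poly_Mapping.lookup x k"
    by (simp add: extend_def lookup_sum lookup_single when_def)
qed

lemma lin_expand: assumes "lin f" shows "f x = (\<Sum>i\<in>Poly_Mapping.keys x. vscale (Poly_Mapping.lookup x i) (f (bv i)))"
proof -
  have "f x = f (extend bv x)" by (simp only: extend_bv)
  also have "\<dots> = extend (f \<circ> bv) x" by (rule lin_extend_comm[OF assms])
  finally show ?thesis by (simp add: extend_def)
qed

lemma lookup_tprod[simp]: "Poly_Mapping.lookup (tprod x y) (i, j) = Poly_Mapping.lookup x i * Poly_Mapping.lookup y j"
proof -
  let ?g = "\<lambda>(i, j). Poly_Mapping.lookup x i * Poly_Mapping.lookup y j"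
  have "{p. ?g p \<noteq> 0} \<subseteq> Poly_Mapping.keys x \<times> Poly_Mapping.keys y"
    by (auto simp: in_keys_iff)
  then have "finite {p. ?g p \<noteq> 0}"
    by (meson finite_SigmaI finite_keys finite_subset)
  then show ?thesis unfolding tprod_def by simp
qed

lemma tprod_expand:
  "tprod (\<Sum>i\<in>A. vscale (a i) (x i)) (\<Sum>j\<in>B. vscale (b j) (y j))
   = (\<Sum>i\<in>A. \<Sum>j\<in>B. vscale (a i * b j) (tprod (x i) (y j)))"
proof (rule poly_mapping_eqI)
  fix k :: "'a \<times> 'b"
  obtain p q where k: "k = (p, q)" by (cases k)
  show "Poly_Mapping.lookup (tprod (\<Sum>i\<in>A. vscale (a i) (x i)) (\<Sum>j\<in>B. vscale (b j) (y j))) k =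
        Poly_Mapping.lookup (\<Sum>i\<in>A. \<Sum>j\<in>B. vscale (a i * b j) (tprod (x i) (y j))) k"
    unfolding k lookup_tprod lookup_sum lookup_vscale sum_product
    by (intro sum.cong refl) (simp add: mult_ac)
qed

lemma extend_single: "extend b (bv p) = b p"
  by (simp add: extend_def)

lemma lin_vscale: "lin f \<Longrightarrow> f (vscale c x) = vscale c (f x)"
  by (simp add: lin_def)

lemma tmap_tprod:
  assumes "lin f" "lin h"
  shows "tmap f h (tprod u v) = tprod (f u) (h v)"
proof -
  have L: "lin (tmap f h)" by (simp add: tmap_def lin_extend)
  have bb: "tprod (bv i) (bv j) = bv (i, j)" for i j
    by (rule poly_mapping_eqI) (auto simp: lookup_single when_def split: if_splits)
  have 2: "tmap f h (tprod (bv i) (bv j)) = tprod (f (bv i)) (h (bv j))" for i j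
    by (simp add: bb tmap_def extend_single)
  have eu: "u = (\<Sum>i\<in>Poly_Mapping.keys u. vscale (Poly_Mapping.lookup u i) (bv i))"
    using lin_expand[OF lin_id, of u] by simp
  have ev: "v = (\<Sum>j\<in>Poly_Mapping.keys v. vscale (Poly_Mapping.lookup v j) (bv j))"
    using lin_expand[OF lin_id, of v] by simp
  have "tprod u v = (\<Sum>i\<in>Poly_Mapping.keys u. \<Sum>j\<in>Poly_Mapping.keys v. vscale (Poly_Mapping.lookup u i * Poly_Mapping.lookup v j) (tprod (bv i) (bv j)))"
    by (subst eu, subst ev, rule tprod_expand)
  then have "tmap f h (tprod u v) = (\<Sum>i\<in>Poly_Mapping.keys u. \<Sum>j\<in>Poly_Mapping.keys v. vscale (Poly_Mapping.lookup u i * Poly_Mapping.lookup v j) (tmap f h (tprod (bv i) (bv j))))"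
    by (simp only: lin_sum[OF L] lin_vscale[OF L])
  also have "\<dots> = (\<Sum>i\<in>Poly_Mapping.keys u. \<Sum>j\<in>Poly_Mapping.keys v. vscale (Poly_Mapping.lookup u i * Poly_Mapping.lookup v j) (tprod (f (bv i)) (h (bv j))))"
    by (simp only: 2)
  also have "\<dots> = tprod (\<Sum>i\<in>Poly_Mapping.keys u. vscale (Poly_Mapping.lookup u i) (f (bv i))) (\<Sum>j\<in>Poly_Mapping.keys v. vscale (Poly_Mapping.lookup v j) (h (bv j)))"
    by (rule tprod_expand[symmetric])
  also have "\<dots> = tprod (f u) (h v)"
    using lin_expand[OF assms(1), of u] lin_expand[OF assms(2), of v] by simp
  finally show ?thesis .
qed

lemma tmap_comp:
  assumes "lin f" "lin h"
  shows "tmap f h \<circ> tmap g k = tmap (f \<circ> g) (h \<circ> k)"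
proof
  fix x
  have l: "lin (tmap f h)" by (simp add: tmap_def lin_extend)
  show "(tmap f h \<circ> tmap g k) x = tmap (f \<circ> g) (h \<circ> k) x"
    unfolding comp_apply tmap_def[of g k] lin_extend_comm[OF l] tmap_def[of "f \<circ> g" "h \<circ> k"]
    by (simp add: comp_def case_prod_unfold tmap_tprod[OF assms])
qed

lemma tmapL_comp:
  assumes "lin f" "lin h"
  shows "tmap f h \<circ> tmapL F g = tmapL (f \<circ> F) (h \<circ> g)"
proof
  fix x
  have l: "lin (tmap f h)" by (simp add: tmap_def lin_extend)
  show "(tmap f h \<circ> tmapL F g) x = tmapL (f \<circ> F) (h \<circ> g) x"
    unfolding comp_apply tmapL_def[of F g] lin_extend_comm[OF l] tmapL_def[of "f \<circ> F" "h \<circ> g"]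
    by (simp add: comp_def case_prod_unfold tmap_tprod[OF assms])
qed


theorem proposition2p4:
  fixes mu :: "('b \<times> 'b \<Rightarrow>\<^sub>0 'k::field) \<Rightarrow> ('b \<Rightarrow>\<^sub>0 'k)"
    and alpha :: "('b \<Rightarrow>\<^sub>0 'k) \<Rightarrow> ('b \<Rightarrow>\<^sub>0 'k)"
    and T :: "('b \<times> 'b \<Rightarrow>\<^sub>0 'k) \<Rightarrow> ('b \<times> 'b \<Rightarrow>\<^sub>0 'k)"
    and T1 T2 :: "('b \<times> 'b \<times> 'b \<Rightarrow>\<^sub>0 'k) \<Rightarrow> ('b \<times> 'b \<times> 'b \<Rightarrow>\<^sub>0 'k)"
  assumes "assoc_algebra mu"
    and "alg_endo mu alpha"
    and "tmap alpha alpha \<circ> T = T \<circ> tmap alpha alpha"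
  shows "(pseudotwistor mu T T1 T2 \<longrightarrow>
            hom_pseudotwistor (alpha \<circ> mu) alpha T T1 T2
          \<and> alg_endo (mu \<circ> T) alpha
          \<and> ((alpha \<circ> mu) \<circ> T, alpha) = (alpha \<circ> (mu \<circ> T), alpha))
       \<and> (twistor mu T \<longrightarrow> hom_twistor (alpha \<circ> mu) alpha T)"
proof -
  have la: "lin alpha" using assms(2) by (simp add: alg_endo_def)
  have am: "alpha \<circ> mu = mu \<circ> tmap alpha alpha" using assms(2) by (simp add: alg_endo_def)
  have c1: "tmap alpha (alpha \<circ> mu) = tmap alpha alpha \<circ> tmap id mu"
    using tmap_comp[OF la la, of id mu] by simp
  have c2: "tmapL (alpha \<circ> mu) alpha = tmap alpha alpha \<circ> tmapL mu id"
    using tmapL_comp[OF la la, of mu id] by simp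
  have e1: "T \<circ> tmap alpha (alpha \<circ> mu) = tmap alpha alpha \<circ> (T \<circ> tmap id mu)"
    using assms(3) by (simp add: c1 o_assoc)
  have e2: "T \<circ> tmapL (alpha \<circ> mu) alpha = tmap alpha alpha \<circ> (T \<circ> tmapL mu id)"
    using assms(3) by (simp add: c2 o_assoc)
  have P: "hom_pseudotwistor (alpha \<circ> mu) alpha T T1 T2
          \<and> alg_endo (mu \<circ> T) alpha
          \<and> ((alpha \<circ> mu) \<circ> T, alpha) = (alpha \<circ> (mu \<circ> T), alpha)"
    if pt: "pseudotwistor mu T T1 T2"
  proof (intro conjI)
    have p1: "T \<circ> tmap id mu = tmap id mu \<circ> T1 \<circ> T12 T"
      and p2: "T \<circ> tmapL mu id = tmapL mu id \<circ> T2 \<circ> T23 T"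
      using pt unfolding pseudotwistor_def by auto
    have "T \<circ> tmap alpha (alpha \<circ> mu) = tmap alpha (alpha \<circ> mu) \<circ> T1 \<circ> T12 T"
      proof -
        have "T \<circ> tmap alpha (alpha \<circ> mu) = tmap alpha alpha \<circ> (T \<circ> tmap id mu)" by (rule e1)
        also have "\<dots> = tmap alpha alpha \<circ> (tmap id mu \<circ> T1 \<circ> T12 T)" by (simp only: p1)
        also have "\<dots> = tmap alpha (alpha \<circ> mu) \<circ> T1 \<circ> T12 T" by (simp add: c1 comp_assoc)
        finally show ?thesis .
      qed
    moreover have "T \<circ> tmapL (alpha \<circ> mu) alpha = tmapL (alpha \<circ> mu) alpha \<circ> T2 \<circ> T23 T"
      proof -
        have "T \<circ> tmapL (alpha \<circ> mu) alpha = tmap alpha alpha \<circ> (T \<circ> tmapL mu id)" by (rule e2)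
        also have "\<dots> = tmap alpha alpha \<circ> (tmapL mu id \<circ> T2 \<circ> T23 T)" by (simp only: p2)
        also have "\<dots> = tmapL (alpha \<circ> mu) alpha \<circ> T2 \<circ> T23 T" by (simp add: c2 comp_assoc)
        finally show ?thesis .
      qed
    ultimately show "hom_pseudotwistor (alpha \<circ> mu) alpha T T1 T2"
      using pt assms(3) unfolding hom_pseudotwistor_def pseudotwistor_def
      by blast
    show "alg_endo (mu \<circ> T) alpha"
    proof -
      have "alpha \<circ> (mu \<circ> T) = (alpha \<circ> mu) \<circ> T" by (simp only: o_assoc)
      also have "\<dots> = mu \<circ> (tmap alpha alpha \<circ> T)" by (simp only: am comp_assoc)
      also have "\<dots> = (mu \<circ> T) \<circ> tmap alpha alpha" by (simp only: assms(3) comp_assoc)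
      finally show ?thesis unfolding alg_endo_def using la by blast
    qed
  qed (simp add: comp_assoc)
  have Q: "hom_twistor (alpha \<circ> mu) alpha T" if tw: "twistor mu T"
  proof -
    have p1: "T \<circ> tmap id mu = tmap id mu \<circ> T13 T \<circ> T12 T"
      and p2: "T \<circ> tmapL mu id = tmapL mu id \<circ> T13 T \<circ> T23 T"
      using tw unfolding twistor_def by auto
    have "T \<circ> tmap alpha (alpha \<circ> mu) = tmap alpha (alpha \<circ> mu) \<circ> T13 T \<circ> T12 T"
      proof -
        have "T \<circ> tmap alpha (alpha \<circ> mu) = tmap alpha alpha \<circ> (T \<circ> tmap id mu)" by (rule e1)
        also have "\<dots> = tmap alpha alpha \<circ> (tmap id mu \<circ> T13 T \<circ> T12 T)" by (simp only: p1)
        also have "\<dots> = tmap alpha (alpha \<circ> mu) \<circ> T13 T \<circ> T12 T" by (simp add: c1 comp_assoc)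
        finally show ?thesis .
      qed
    moreover have "T \<circ> tmapL (alpha \<circ> mu) alpha = tmapL (alpha \<circ> mu) alpha \<circ> T13 T \<circ> T23 T"
      proof -
        have "T \<circ> tmapL (alpha \<circ> mu) alpha = tmap alpha alpha \<circ> (T \<circ> tmapL mu id)" by (rule e2)
        also have "\<dots> = tmap alpha alpha \<circ> (tmapL mu id \<circ> T13 T \<circ> T23 T)" by (simp only: p2)
        also have "\<dots> = tmapL (alpha \<circ> mu) alpha \<circ> T13 T \<circ> T23 T" by (simp add: c2 comp_assoc)
        finally show ?thesis .
      qed
    ultimately show ?thesis
      using tw assms(3) unfolding hom_twistor_def twistor_def
      by blast
  qed
  show ?thesis using P Q by blast
qed

end
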